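(* Let $I$ be a countable set with $|I|\ge2$, let $\mathfrak{M}_i=(S_i,\mathcal{L}_i)$, $i\in I$, be partial linear spaces and $\mathfrak{M}=\bigotimes_{i\in I}\mathfrak{M}_i$. Every degenerate hyperplane of $\mathfrak{M}$ is not flappy.
   Context: A partial linear space is a pair $(S,\mathcal{L})$ of points and lines such that every line has at least two points, every point lies on a line, two distinct lines share at most one point; points are collinear ($a\sim b$) if on a common line, $[a]_\sim$ is the set of points collinear with $a$. A subspace is a set $X$ such that any line meeting it in at least two points lies in it; a hyperplane is a proper subspace meeting every line. A hyperplane $X$ is flappy if for every line $L\subseteq X$ there is $a\notin X$ with $L\subseteq[a]_\sim$. Segre product: point set $S=\prod_{i\in I}S_i$; for $a\in S$, $x\in S_i$, $a[i/x]$ is $a$ with $i$-th coordinate replaced by $x$, and $a[i/A]=\{a[i/x]:x\in A\}$; lines are $a[i/l]$ for $a\in S$, $i\in I$, $l\in\mathcal{L}_i$. For a hyperplane $\mathcal{H}$ of $\mathfrak{M}$, $\mathcal{H}^{[a]}_i=\{x\in S_i: a[i/x]\in\mathcal{H}\}$; $\mathcal{H}$ is non-degenerate if $\mathcal{H}^{[a]}_i$ is a hyperplane of $\mathfrak{M}_i$ for all $a\in S$, $i\in I$, and degenerate otherwise. *)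

theory Defs
  imports Main "HOL-Library.FuncSet" "HOL-Library.Countable_Set"
begin

definition partial_linear_space :: "'a set \<Rightarrow> 'a set set \<Rightarrow> bool" where
  "partial_linear_space S L \<longleftrightarrow>
     (\<forall>l\<in>L. l \<subseteq> S \<and> (\<exists>x y. x \<in> l \<and> y \<in> l \<and> x \<noteq> y)) \<and>
     (\<forall>a\<in>S. \<exists>l\<in>L. a \<in> l) \<and>
     (\<forall>l\<in>L. \<forall>m\<in>L. l \<noteq> m \<longrightarrow> (\<forall>x y. x \<in> l \<inter> m \<and> y \<in> l \<inter> m \<longrightarrow> x = y))"

definition collinear :: "'a set set \<Rightarrow> 'a \<Rightarrow> 'a \<Rightarrow> bool" where
  "collinear L a b \<longleftrightarrow> (\<exists>l\<in>L. a \<in> l \<and> b \<in> l)"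

definition coll_set :: "'a set \<Rightarrow> 'a set set \<Rightarrow> 'a \<Rightarrow> 'a set" where
  "coll_set S L a = {b \<in> S. collinear L a b}"

definition subspace :: "'a set \<Rightarrow> 'a set set \<Rightarrow> 'a set \<Rightarrow> bool" where
  "subspace S L X \<longleftrightarrow> X \<subseteq> S \<and>
     (\<forall>l\<in>L. (\<exists>x y. x \<noteq> y \<and> x \<in> l \<inter> X \<and> y \<in> l \<inter> X) \<longrightarrow> l \<subseteq> X)"

definition hyperplane :: "'a set \<Rightarrow> 'a set set \<Rightarrow> 'a set \<Rightarrow> bool" where
  "hyperplane S L X \<longleftrightarrow> subspace S L X \<and> X \<noteq> S \<and> (\<forall>l\<in>L. l \<inter> X \<noteq> {})"

definition flappy :: "'a set \<Rightarrow> 'a set set \<Rightarrow> 'a set \<Rightarrow> bool" where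
  "flappy S L X \<longleftrightarrow> (\<forall>l\<in>L. l \<subseteq> X \<longrightarrow> (\<exists>a \<in> S - X. l \<subseteq> coll_set S L a))"

text \<open>Segre product of the family (S i, L i), i \<in> I. Points are the (extensional)
elements of the cartesian product; a[i/x] is the function update a(i := x).\<close>
definition segre_points :: "'i set \<Rightarrow> ('i \<Rightarrow> 'a set) \<Rightarrow> ('i \<Rightarrow> 'a) set" where
  "segre_points I S = (\<Pi>\<^sub>E i\<in>I. S i)"

definition segre_lines :: "'i set \<Rightarrow> ('i \<Rightarrow> 'a set) \<Rightarrow> ('i \<Rightarrow> 'a set set) \<Rightarrow> ('i \<Rightarrow> 'a) set set" where
  "segre_lines I S L = {(\<lambda>x. a(i := x)) ` l | a i l. a \<in> segre_points I S \<and> i \<in> I \<and> l \<in> L i}"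

definition hyp_section :: "('i \<Rightarrow> 'a set) \<Rightarrow> ('i \<Rightarrow> 'a) set \<Rightarrow> ('i \<Rightarrow> 'a) \<Rightarrow> 'i \<Rightarrow> 'a set" where
  "hyp_section S H a i = {x \<in> S i. a(i := x) \<in> H}"

definition non_degenerate :: "'i set \<Rightarrow> ('i \<Rightarrow> 'a set) \<Rightarrow> ('i \<Rightarrow> 'a set set) \<Rightarrow> ('i \<Rightarrow> 'a) set \<Rightarrow> bool" where
  "non_degenerate I S L H \<longleftrightarrow>
     (\<forall>a \<in> segre_points I S. \<forall>i \<in> I. hyperplane (S i) (L i) (hyp_section S H a i))"

definition degenerate :: "'i set \<Rightarrow> ('i \<Rightarrow> 'a set) \<Rightarrow> ('i \<Rightarrow> 'a set set) \<Rightarrow> ('i \<Rightarrow> 'a) set \<Rightarrow> bool" where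
  "degenerate I S L H \<longleftrightarrow> \<not> non_degenerate I S L H"

end

theory Submission
  imports Defs
begin

lemma segre_coll_agree:
  assumes "collinear (segre_lines I S L) b d"
  shows "\<exists>k. \<forall>j. j \<noteq> k \<longrightarrow> b j = d j"
proof -
  from assms obtain ln where ln: "ln \<in> segre_lines I S L" "b \<in> ln" "d \<in> ln"
    unfolding collinear_def by blast
  then obtain c k m where "ln = (\<lambda>x. c(k := x)) ` m"
    unfolding segre_lines_def by blast
  with ln obtain z1 z2 where "b = c(k := z1)" "d = c(k := z2)" by blast
  then show ?thesis by auto
qed

theorem lemma3p7:
  fixes I :: "'i set" and S :: "'i \<Rightarrow> 'a set" and L :: "'i \<Rightarrow> 'a set set"
    and H :: "('i \<Rightarrow> 'a) set"
  assumes "countable I"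
    and "\<exists>i\<in>I. \<exists>j\<in>I. i \<noteq> j"
    and "\<forall>i\<in>I. partial_linear_space (S i) (L i)"
    and "hyperplane (segre_points I S) (segre_lines I S L) H"
    and "degenerate I S L H"
  shows "\<not> flappy (segre_points I S) (segre_lines I S L) H"
proof
  assume fl: "flappy (segre_points I S) (segre_lines I S L) H"
  from assms(5) obtain a i where a: "a \<in> segre_points I S" and i: "i \<in> I"
    and nh: "\<not> hyperplane (S i) (L i) (hyp_section S H a i)"
    unfolding degenerate_def non_degenerate_def by blast
  have pls: "partial_linear_space (S i) (L i)" using assms(3) i by blast
  have Hsub: "subspace (segre_points I S) (segre_lines I S L) H"
    and Hmeet: "\<forall>l\<in>segre_lines I S L. l \<inter> H \<noteq> {}"
    using assms(4) unfolding hyperplane_def by auto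
  have upd: "a(i := x) \<in> segre_points I S" if "x \<in> S i" for x
    using a i that unfolding segre_points_def PiE_def Pi_def extensional_def by auto
  have lineI: "(\<lambda>x. a(i := x)) ` l \<in> segre_lines I S L" if "l \<in> L i" for l
    unfolding segre_lines_def using a i that by blast
  have lS: "l \<subseteq> S i" if "l \<in> L i" for l
    using pls that unfolding partial_linear_space_def by blast
  have sub: "subspace (S i) (L i) (hyp_section S H a i)"
    unfolding subspace_def
  proof (intro conjI ballI impI)
    show "hyp_section S H a i \<subseteq> S i" unfolding hyp_section_def by auto
  next
    fix l assume l: "l \<in> L i"
      and ex: "\<exists>x y. x \<noteq> y \<and> x \<in> l \<inter> hyp_section S H a i \<and> y \<in> l \<inter> hyp_section S H a i"
    then obtain x y where xy: "x \<noteq> y" "x \<in> l" "y \<in> l" "a(i:=x) \<in> H" "a(i:=y) \<in> H"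
      unfolding hyp_section_def by blast
    have "a(i:=x) \<noteq> a(i:=y)" using xy(1) by (metis fun_upd_same)
    then have "(\<lambda>x. a(i := x)) ` l \<subseteq> H"
      using Hsub lineI[OF l] xy unfolding subspace_def by blast
    then show "l \<subseteq> hyp_section S H a i"
      using lS[OF l] unfolding hyp_section_def by blast
  qed
  have meet: "\<forall>l\<in>L i. l \<inter> hyp_section S H a i \<noteq> {}"
  proof
    fix l assume l: "l \<in> L i"
    then obtain x where "x \<in> l" "a(i:=x) \<in> H" using Hmeet lineI[OF l] by blast
    then show "l \<inter> hyp_section S H a i \<noteq> {}"
      using lS[OF l] unfolding hyp_section_def by blast
  qed
  have "hyp_section S H a i = S i" using nh sub meet unfolding hyperplane_def by blast
  then have fib: "a(i := x) \<in> H" if "x \<in> S i" for x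
    using that unfolding hyp_section_def by blast
  have ai: "a i \<in> S i" using a i unfolding segre_points_def by auto
  then obtain l where l: "l \<in> L i" "a i \<in> l"
    using pls unfolding partial_linear_space_def by blast
  have "\<exists>x y. x \<in> l \<and> y \<in> l \<and> x \<noteq> y"
    using pls l(1) unfolding partial_linear_space_def by (meson bspec)
  then obtain x y where xy: "x \<in> l" "y \<in> l" "x \<noteq> y" by blast
  have "(\<lambda>x. a(i := x)) ` l \<subseteq> H" using fib lS[OF l(1)] by blast
  with fl lineI[OF l(1)] obtain b where b: "b \<in> segre_points I S" "b \<notin> H"
    and bc: "(\<lambda>x. a(i := x)) ` l \<subseteq> coll_set (segre_points I S) (segre_lines I S L) b"
    unfolding flappy_def by blast
  have "collinear (segre_lines I S L) b (a(i:=x))"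
    using bc xy(1) unfolding coll_set_def by blast
  then obtain k1 where k1: "\<forall>j. j \<noteq> k1 \<longrightarrow> b j = (a(i:=x)) j"
    using segre_coll_agree by blast
  have "collinear (segre_lines I S L) b (a(i:=y))"
    using bc xy(2) unfolding coll_set_def by blast
  then obtain k2 where k2: "\<forall>j. j \<noteq> k2 \<longrightarrow> b j = (a(i:=y)) j"
    using segre_coll_agree by blast
  have "b = a(i := b i)"
  proof
    fix j show "b j = (a(i := b i)) j"
    proof (cases "j = i")
      case True then show ?thesis by simp
    next
      case False
      show ?thesis
      proof (rule ccontr)
        assume "b j \<noteq> (a(i := b i)) j"
        with False have "b j \<noteq> a j" by simp
        with False k1 k2 have "j = k1" "j = k2" by auto
        with False k1 k2 have "b i = x" "b i = y" by auto
        with xy(3) show False by simp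
      qed
    qed
  qed
  moreover have "b i \<in> S i" using b(1) i unfolding segre_points_def by auto
  ultimately have "b \<in> H" using fib by metis
  with b(2) show False by simp
qed

end
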